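(* Let $X$ be a $T_1$ space with countable extent and $|X|<\mathfrak{b}$. Then $X$ is selectively strongly star-Menger if and only if $X$ is strongly selectively $(a)$.
   Context: All spaces are regular. $St(A,\mathcal{U})=\bigcup\{U\in\mathcal{U}:U\cap A\neq\emptyset\}$. $\mathfrak{b}$ is the bounding number. $X$ has countable extent if every closed discrete subset is countable. $X$ is selectively strongly star-Menger if for every sequence $(\mathcal{U}_n:n\in\omega)$ of open covers and every sequence $(D_n:n\in\omega)$ of dense subsets there are finite $F_n\subseteq D_n$ with $\{St(F_n,\mathcal{U}_n):n\in\omega\}$ covering $X$. $X$ is strongly selectively $(a)$ if for every such $(\mathcal{U}_n)$ and $(D_n)$ there are $C_n\subseteq D_n$, closed and discrete in $X$, with $\{St(C_n,\mathcal{U}_n):n\in\omega\}$ covering $X$. *)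

theory Defs
  imports "HOL-Analysis.Analysis"
begin

definition St :: "'a set \<Rightarrow> 'a set set \<Rightarrow> 'a set" where
  "St A \<U> = \<Union>{U \<in> \<U>. U \<inter> A \<noteq> {}}"

definition open_cover :: "'a topology \<Rightarrow> 'a set set \<Rightarrow> bool" where
  "open_cover X \<U> \<longleftrightarrow> (\<forall>U\<in>\<U>. openin X U) \<and> \<Union>\<U> = topspace X"

definition dense_in :: "'a topology \<Rightarrow> 'a set \<Rightarrow> bool" where
  "dense_in X D \<longleftrightarrow> D \<subseteq> topspace X \<and> X closure_of D = topspace X"

definition closed_discrete :: "'a topology \<Rightarrow> 'a set \<Rightarrow> bool" where
  "closed_discrete X C \<longleftrightarrow> closedin X C \<and>
     (\<forall>x\<in>C. \<exists>U. openin X U \<and> U \<inter> C = {x})"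

definition countable_extent :: "'a topology \<Rightarrow> bool" where
  "countable_extent X \<longleftrightarrow> (\<forall>C. closed_discrete X C \<longrightarrow> countable C)"

definition unbounded_family :: "(nat \<Rightarrow> nat) set \<Rightarrow> bool" where
  "unbounded_family F \<longleftrightarrow>
     \<not> (\<exists>g::nat \<Rightarrow> nat. \<forall>f\<in>F. \<forall>\<^sub>F n in sequentially. f n \<le> g n)"

text \<open>|S| < \<b>: since \<b> is the least cardinality of an unbounded family,
  this says |S| is strictly smaller than every unbounded family.\<close>
definition card_less_b :: "'a set \<Rightarrow> bool" where
  "card_less_b S \<longleftrightarrow>
     (\<forall>F. unbounded_family F \<longrightarrow> (card_of S, card_of F) \<in> ordLess)"

definition selectively_strongly_star_Menger :: "'a topology \<Rightarrow> bool" where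
  "selectively_strongly_star_Menger X \<longleftrightarrow>
     (\<forall>(\<U>::nat \<Rightarrow> 'a set set) (D::nat \<Rightarrow> 'a set). (\<forall>n. open_cover X (\<U> n)) \<and> (\<forall>n. dense_in X (D n)) \<longrightarrow>
        (\<exists>F. (\<forall>n. finite (F n) \<and> F n \<subseteq> D n) \<and>
             (\<Union>n. St (F n) (\<U> n)) = topspace X))"

definition strongly_selectively_a :: "'a topology \<Rightarrow> bool" where
  "strongly_selectively_a X \<longleftrightarrow>
     (\<forall>(\<U>::nat \<Rightarrow> 'a set set) (D::nat \<Rightarrow> 'a set). (\<forall>n. open_cover X (\<U> n)) \<and> (\<forall>n. dense_in X (D n)) \<longrightarrow>
        (\<exists>C. (\<forall>n. C n \<subseteq> D n \<and> closed_discrete X (C n)) \<and>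
             (\<Union>n. St (C n) (\<U> n)) = topspace X))"

end

theory Submission
  imports Defs "HOL-Library.Nat_Bijection"
begin

lemma St_mono: "A \<subseteq> B \<Longrightarrow> St A U \<subseteq> St B U"
  unfolding St_def by blast

lemma St_empty[simp]: "St {} U = {}"
  unfolding St_def by blast

lemma St_sub: "open_cover X U \<Longrightarrow> St A U \<subseteq> topspace X"
  unfolding St_def open_cover_def by blast

lemma St_range: "x \<in> St (range e) U \<Longrightarrow> \<exists>k. x \<in> St {e k} U"
  unfolding St_def by blast

lemma finite_cd:
  assumes "t1_space X" "finite F" "F \<subseteq> topspace X"
  shows "closed_discrete X F"
  unfolding closed_discrete_def
proof (intro conjI ballI)
  show "closedin X F" using assms t1_space_closedin_finite by blast
  fix x assume "x \<in> F"
  have "closedin X (F - {x})" using assms t1_space_closedin_finite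
    by (metis Diff_subset finite_Diff subset_trans)
  hence "openin X (topspace X - (F - {x}))" by blast
  moreover have "(topspace X - (F - {x})) \<inter> F = {x}" using \<open>x \<in> F\<close> assms by blast
  ultimately show "\<exists>U. openin X U \<and> U \<inter> F = {x}" by blast
qed

lemma bounded_of_lessb:
  fixes h :: "'a \<Rightarrow> nat \<Rightarrow> nat"
  assumes "card_less_b S"
  shows "\<exists>g. \<forall>x\<in>S. \<forall>\<^sub>F n in sequentially. h x n \<le> g n"
proof (rule ccontr)
  assume "\<not> ?thesis"
  hence "unbounded_family (h ` S)" unfolding unbounded_family_def by blast
  hence "(card_of S, card_of (h ` S)) \<in> ordLess" using assms card_less_b_def by blast
  moreover have "(card_of (h ` S), card_of S) \<in> ordLeq" by (rule card_of_image)
  ultimately show False using not_ordLess_ordLeq by blast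
qed

theorem mainTheorem17:
  fixes X :: "'a topology"
  assumes "regular_space X" and "t1_space X"
    and "countable_extent X" and "card_less_b (topspace X)"
  shows "selectively_strongly_star_Menger X \<longleftrightarrow> strongly_selectively_a X"
proof
  assume H: "selectively_strongly_star_Menger X"
  show "strongly_selectively_a X"
    unfolding strongly_selectively_a_def
  proof (intro allI impI)
    fix U :: "nat \<Rightarrow> 'a set set" and D :: "nat \<Rightarrow> 'a set"
    assume A: "(\<forall>n. open_cover X (U n)) \<and> (\<forall>n. dense_in X (D n))"
    then obtain F :: "nat \<Rightarrow> 'a set" where F: "\<forall>n. finite (F n) \<and> F n \<subseteq> D n"
      "(\<Union>n. St (F n) (U n)) = topspace X"
      using H[unfolded selectively_strongly_star_Menger_def, rule_format, of U D] by blast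
    have "\<forall>n. F n \<subseteq> D n \<and> closed_discrete X (F n)"
    proof
      fix n
      have "F n \<subseteq> topspace X" using F A unfolding dense_in_def by blast
      thus "F n \<subseteq> D n \<and> closed_discrete X (F n)" using F finite_cd assms(2) by blast
    qed
    thus "\<exists>C. (\<forall>n. C n \<subseteq> D n \<and> closed_discrete X (C n)) \<and>
             (\<Union>n. St (C n) (U n)) = topspace X" using F by blast
  qed
next
  assume H: "strongly_selectively_a X"
  show "selectively_strongly_star_Menger X"
    unfolding selectively_strongly_star_Menger_def
  proof (intro allI impI)
    fix U :: "nat \<Rightarrow> 'a set set" and D :: "nat \<Rightarrow> 'a set"
    assume A: "(\<forall>n. open_cover X (U n)) \<and> (\<forall>n. dense_in X (D n))"
    have "\<forall>m. \<exists>C. (\<forall>j. C j \<subseteq> D (prod_encode (m,j)) \<and> closed_discrete X (C j)) \<and>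
             (\<Union>j. St (C j) (U (prod_encode (m,j)))) = topspace X"
    proof
      fix m
      show "\<exists>C. (\<forall>j. C j \<subseteq> D (prod_encode (m,j)) \<and> closed_discrete X (C j)) \<and>
             (\<Union>j. St (C j) (U (prod_encode (m,j)))) = topspace X"
      proof -
        have "(\<forall>j. open_cover X (U (prod_encode (m,j)))) \<and> (\<forall>j. dense_in X (D (prod_encode (m,j))))"
          using A by blast
        thus ?thesis using H[unfolded strongly_selectively_a_def, rule_format,
            of "\<lambda>j. U (prod_encode (m,j))" "\<lambda>j. D (prod_encode (m,j))"] by simp
      qed
    qed
    then obtain CC where CC: "\<forall>m. (\<forall>j. CC m j \<subseteq> D (prod_encode (m,j)) \<and> closed_discrete X (CC m j)) \<and>
             (\<Union>j. St (CC m j) (U (prod_encode (m,j)))) = topspace X"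
      by (rule choice[THEN exE]) blast
    define C where "C n = CC (fst (prod_decode n)) (snd (prod_decode n))" for n
    have Cenc: "C (prod_encode (m,j)) = CC m j" for m j unfolding C_def by simp
    have CD: "C n \<subseteq> D n \<and> closed_discrete X (C n)" for n
    proof -
      obtain m j where mj: "prod_decode n = (m,j)" by (cases "prod_decode n")
      have n: "n = prod_encode (m,j)" using prod_decode_inverse[of n] mj by simp
      have "CC m j \<subseteq> D (prod_encode (m,j)) \<and> closed_discrete X (CC m j)"
        using CC by blast
      thus ?thesis using n Cenc[of m j] by simp
    qed
    have Ccnt: "countable (C n)" for n
      using CD[of n] assms(3) unfolding countable_extent_def by blast
    have Cinf: "\<exists>n\<ge>N. x \<in> St (C n) (U n)" if "x \<in> topspace X" for x N
    proof -
      have "x \<in> (\<Union>j. St (CC N j) (U (prod_encode (N,j))))" using CC that by blast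
      then obtain j where j: "x \<in> St (CC N j) (U (prod_encode (N,j)))" by blast
      have "prod_encode (N,j) \<ge> N" by (rule le_prod_encode_1)
      moreover have "x \<in> St (C (prod_encode (N,j))) (U (prod_encode (N,j)))"
        using j Cenc[of N j] by simp
      ultimately show ?thesis by blast
    qed
    define e where "e n = from_nat_into (C n)" for n
    define f where "f x n = (LEAST k. x \<in> St {e n k} (U n))" for x n
    obtain g where g: "\<forall>x\<in>topspace X. \<forall>\<^sub>F n in sequentially. f x n \<le> g n"
      using bounded_of_lessb[OF assms(4)] by blast
    define F where "F n = (if C n = {} then {} else e n ` {..g n})" for n
    have "\<forall>n. finite (F n) \<and> F n \<subseteq> D n"
    proof
      fix n
      have "F n \<subseteq> C n" unfolding F_def e_def using Ccnt
        by (auto intro: from_nat_into)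
      moreover have "finite (F n)" unfolding F_def by simp
      ultimately show "finite (F n) \<and> F n \<subseteq> D n" using CD[of n] by blast
    qed
    moreover have "(\<Union>n. St (F n) (U n)) = topspace X"
    proof
      show "(\<Union>n. St (F n) (U n)) \<subseteq> topspace X" using A St_sub by blast
      show "topspace X \<subseteq> (\<Union>n. St (F n) (U n))"
      proof
        fix x assume x: "x \<in> topspace X"
        obtain N where N: "\<forall>n\<ge>N. f x n \<le> g n" using g x unfolding eventually_sequentially by blast
        obtain n where n: "n \<ge> N" "x \<in> St (C n) (U n)" using Cinf x by blast
        have ne: "C n \<noteq> {}" using n by auto
        hence "range (e n) = C n" unfolding e_def using Ccnt by simp
        hence "\<exists>k. x \<in> St {e n k} (U n)" using n St_range[of x "e n" "U n"] by simp
        hence fx: "x \<in> St {e n (f x n)} (U n)" unfolding f_def by (rule LeastI_ex)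
        have "e n (f x n) \<in> F n" using N n ne unfolding F_def by auto
        hence "x \<in> St (F n) (U n)" using fx St_mono[of "{e n (f x n)}" "F n"] by blast
        thus "x \<in> (\<Union>n. St (F n) (U n))" by blast
      qed
    qed
    ultimately show "\<exists>F. (\<forall>n. finite (F n) \<and> F n \<subseteq> D n) \<and> (\<Union>n. St (F n) (U n)) = topspace X"
      by blast
  qed
qed

end
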